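(* Let $A\in\mathbb{R}^{n\times n}$ be symmetric, $\beta>0$, $f(\mathbf{z})=\frac12\mathbf{z}^TA\mathbf{z}+\frac{\beta}{2}\sum_kz_k^4$ on $\mathbb{S}^{n-1}$. Let $\nu\in(0,1]$, $\mathbf{z}_0\in\mathbb{S}^{n-1}$ and $\mathcal{R}_\nu=\{\mathbf{z}\in\mathbb{S}^{n-1}:\|\mathbf{z}-\mathbf{z}_0\|^2\le\nu\}$. If $H_f(\mathbf{z})[\mathbf{v}]>0$ for all $\mathbf{v}\in\mathcal{T}_{\mathbf{z}}\setminus\{0\}$ and all $\mathbf{z}\in\mathcal{R}_\nu$, then the problem $\min_{\mathbf{z}\in\mathcal{R}_\nu}f(\mathbf{z})$ has at most one local minimizer.
   Context: $\mathbb{S}^{n-1}$ is the unit sphere in $\mathbb{R}^n$; $\mathcal{T}_{\mathbf{z}}=\{\mathbf{v}\in\mathbb{R}^n:\mathbf{v}^T\mathbf{z}=0\}$; $H_f(\mathbf{z})[\mathbf{v}]=\mathbf{v}^T[A+6\beta\,\mathrm{diag}(z_1^2,\dots,z_n^2)-2\lambda I]\mathbf{v}$ with $2\lambda=\mathbf{z}^TA\mathbf{z}+2\beta\|\mathbf{z}\|_4^4$ (the Riemannian Hessian quadratic form). *)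

theory Defs
  imports "HOL-Analysis.Analysis"
begin

definition unit_sphere :: "(real ^ 'n) set" where
  "unit_sphere = {z. norm z = 1}"

definition tangent_space :: "real ^ 'n \<Rightarrow> (real ^ 'n) set" where
  "tangent_space z = {v. v \<bullet> z = 0}"

definition obj :: "real ^ 'n ^ 'n \<Rightarrow> real \<Rightarrow> real ^ 'n \<Rightarrow> real" where
  "obj A \<beta> z = (1/2) * (z \<bullet> (A *v z)) + (\<beta>/2) * (\<Sum>k\<in>UNIV. (z $ k) ^ 4)"

definition norm4_pow4 :: "real ^ 'n \<Rightarrow> real" where
  "norm4_pow4 z = (\<Sum>k\<in>UNIV. (z $ k) ^ 4)"

definition hess_form :: "real ^ 'n ^ 'n \<Rightarrow> real \<Rightarrow> real ^ 'n \<Rightarrow> real ^ 'n \<Rightarrow> real" where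
  "hess_form A \<beta> z v =
     (let two_lambda = z \<bullet> (A *v z) + 2 * \<beta> * norm4_pow4 z;
          M = A + (\<chi> i j. if i = j then 6 * \<beta> * (z $ i)^2 else 0) - two_lambda *\<^sub>R mat 1
      in v \<bullet> (M *v v))"

definition region :: "real ^ 'n \<Rightarrow> real \<Rightarrow> (real ^ 'n) set" where
  "region z0 \<nu> = {z \<in> unit_sphere. (norm (z - z0))^2 \<le> \<nu>}"

definition local_minimizer_on :: "((real ^ 'n) \<Rightarrow> real) \<Rightarrow> (real ^ 'n) set \<Rightarrow> real ^ 'n \<Rightarrow> bool" where
  "local_minimizer_on g S z \<longleftrightarrow>
     z \<in> S \<and> (\<exists>\<epsilon>>0. \<forall>w\<in>S. norm (w - z) < \<epsilon> \<longrightarrow> g z \<le> g w)"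

end

theory Submission
  imports Defs
begin

definition cs :: "real^'n \<Rightarrow> real^'n \<Rightarrow> real \<Rightarrow> real^'n" where
  "cs a b t = cos t *\<^sub>R a + sin t *\<^sub>R b"

lemma cs_nth[simp]: "cs a b t $ k = cos t * a $ k + sin t * b $ k"
  by (simp add: cs_def)

lemma bil_deriv:
  fixes A :: "real^'n^'n"
  shows "((\<lambda>t. cs a b t \<bullet> (A *v cs c d t)) has_real_derivative
    (cs b (-a) t \<bullet> (A *v cs c d t) + cs a b t \<bullet> (A *v cs d (-c) t))) (at t)"
  unfolding inner_vec_def matrix_vector_mult_def
  apply (simp add: )
  apply (rule derivative_eq_intros refl | simp)+
  apply (simp add: sum.distrib[symmetric] algebra_simps sum_distrib_left)
  done

lemma quart_deriv:
  shows "((\<lambda>t. \<Sum>k\<in>UNIV. (cs a b t $ k)^4) has_real_derivative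
    (\<Sum>k\<in>UNIV. 4 * (cs a b t $ k)^3 * (cs b (-a) t $ k))) (at t)"
  apply simp
  apply (rule derivative_eq_intros refl | simp)+
  apply (simp add: mult_ac)
  done

lemma mixed_deriv:
  shows "((\<lambda>t. \<Sum>k\<in>UNIV. (cs a b t $ k)^3 * cs c d t $ k) has_real_derivative
    (\<Sum>k\<in>UNIV. 3 * (cs a b t $ k)^2 * (cs b (-a) t $ k) * cs c d t $ k
        + (cs a b t $ k)^3 * cs d (-c) t $ k)) (at t)"
  apply simp
  apply (rule derivative_eq_intros refl | simp)+
  apply (simp add: algebra_simps)
  done

lemma hess_expand:
  fixes A :: "real^'n^'n"
  shows "hess_form A \<beta> z v = v \<bullet> (A *v v) + 6 * \<beta> * (\<Sum>k\<in>UNIV. (z$k)^2 * (v$k)^2)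
     - (z \<bullet> (A *v z) + 2 * \<beta> * norm4_pow4 z) * (v \<bullet> v)"
proof -
  have D: "(\<chi> i j. if i = j then 6 * \<beta> * (z $ i)^2 else 0) *v v = (\<chi> i. 6 * \<beta> * (z $ i)^2 * v $ i)"
    by (auto simp add: vec_eq_iff matrix_vector_mult_def if_distrib[of "\<lambda>x. x * _"] cong: if_cong)
  have E: "v \<bullet> (\<chi> i. 6 * \<beta> * (z $ i)^2 * v $ i) = 6 * \<beta> * (\<Sum>k\<in>UNIV. (z$k)^2 * (v$k)^2)"
    by (simp add: inner_vec_def sum_distrib_left power2_eq_square mult_ac)
  show ?thesis
    unfolding hess_form_def Let_def
    by (simp add: matrix_vector_mult_add_rdistrib matrix_vector_mult_diff_rdistrib
        inner_add_right inner_diff_right D E scaleR_matrix_vector_assoc[symmetric])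
qed
lemma cs_neg[simp]: "cs (-a) (-b) t = - cs a b t"
  by (simp add: cs_def)

lemma cs_inner: "cs a b t \<bullet> cs c d t = cos t * cos t * (a \<bullet> c) + cos t * sin t * (a \<bullet> d)
   + sin t * cos t * (b \<bullet> c) + sin t * sin t * (b \<bullet> d)"
  by (simp add: cs_def inner_add_left inner_add_right algebra_simps)

lemma cs_orth:
  assumes "a \<bullet> a = 1" "b \<bullet> b = 1" "a \<bullet> b = 0"
  shows "cs a b t \<bullet> cs a b t = 1" "cs b (-a) t \<bullet> cs b (-a) t = 1" "cs b (-a) t \<bullet> cs a b t = 0"
  using assms sin_cos_squared_add[of t]
  by (auto simp: cs_inner inner_commute[of b a] power2_eq_square algebra_simps)

lemma G2_hess:
  fixes A :: "real^'n^'n"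
  assumes "q \<bullet> q = 1"
  shows "1/2 * ((- p \<bullet> (A *v p) + q \<bullet> (A *v q)) + (q \<bullet> (A *v q) + p \<bullet> (A *v (- p))))
     + \<beta>/2 * (4 * (\<Sum>k\<in>UNIV. 3 * (p $ k)^2 * q $ k * q $ k + (p $ k)^3 * (- p) $ k))
   = hess_form A \<beta> p q"
proof -
  have h: "(\<Sum>k\<in>UNIV. 3 * (p $ k)^2 * q $ k * q $ k + (p $ k)^3 * (- p) $ k)
      = 3 * (\<Sum>k\<in>UNIV. (p$k)^2 * (q$k)^2) - norm4_pow4 p"
    by (simp add: norm4_pow4_def sum.distrib sum_subtractf sum_distrib_left power2_eq_square
        power3_eq_cube power4_eq_xxxx mult_ac)
  have hA: "A *v (- p) = - (A *v p)"
    by (metis matrix_vector_mult_diff_distrib diff_0 matrix_vector_mult_0_right)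
  show ?thesis using assms unfolding h hA
    by (simp add: hess_expand algebra_simps)
qed
lemma sphere_dist:
  fixes z z0 :: "real^'n"
  assumes "norm z = 1" "norm z0 = 1"
  shows "(norm (z - z0))^2 = 2 - 2 * (z \<bullet> z0)"
proof -
  have "z \<bullet> z = 1" "z0 \<bullet> z0 = 1" using assms by (simp_all add: norm_eq_1)
  then show ?thesis
    by (simp add: power2_norm_eq_inner inner_diff_left inner_diff_right inner_commute[of z0 z])
qed

lemma region_iff:
  assumes "norm z0 = 1"
  shows "z \<in> region z0 \<nu> \<longleftrightarrow> norm z = 1 \<and> z \<bullet> z0 \<ge> 1 - \<nu>/2"
  using sphere_dist[OF _ assms, of z]
  by (auto simp: region_def unit_sphere_def)

theorem lemma9:
  fixes A :: "real ^ 'n ^ 'n" and \<beta> \<nu> :: real and z0 :: "real ^ 'n"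
  assumes symA: "transpose A = A"
    and beta_pos: "\<beta> > 0"
    and nu_pos: "0 < \<nu>" and nu_le: "\<nu> \<le> 1"
    and z0_sphere: "z0 \<in> unit_sphere"
    and hess_pos: "\<forall>z\<in>region z0 \<nu>. \<forall>v\<in>tangent_space z - {0}. hess_form A \<beta> z v > 0"
  shows "\<forall>z1 z2. local_minimizer_on (obj A \<beta>) (region z0 \<nu>) z1
                \<and> local_minimizer_on (obj A \<beta>) (region z0 \<nu>) z2 \<longrightarrow> z1 = z2"
proof (intro allI impI)
  fix z1 z2
  assume "local_minimizer_on (obj A \<beta>) (region z0 \<nu>) z1
                \<and> local_minimizer_on (obj A \<beta>) (region z0 \<nu>) z2"
  then have lm1: "local_minimizer_on (obj A \<beta>) (region z0 \<nu>) z1"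
    and lm2: "local_minimizer_on (obj A \<beta>) (region z0 \<nu>) z2" by auto
  show "z1 = z2"
  proof (rule ccontr)
    assume ne: "z1 \<noteq> z2"
    define m where "m = 1 - \<nu>/2"
    have m_pos: "m > 0" using nu_le by (simp add: m_def)
    have nz0: "norm z0 = 1" using z0_sphere by (simp add: unit_sphere_def)
    note R = region_iff[OF nz0, of _ \<nu>, folded m_def]
    have z1R: "z1 \<in> region z0 \<nu>" and z2R: "z2 \<in> region z0 \<nu>"
      using lm1 lm2 by (auto simp: local_minimizer_on_def)
    have n1: "norm z1 = 1" and c1: "z1 \<bullet> z0 \<ge> m" using z1R R by auto
    have n2: "norm z2 = 1" and c2: "z2 \<bullet> z0 \<ge> m" using z2R R by auto
    have ii1: "z1 \<bullet> z1 = 1" and ii2: "z2 \<bullet> z2 = 1" using n1 n2 by (simp_all add: norm_eq_1)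
    define c where "c = z1 \<bullet> z2"
    have cabs: "\<bar>c\<bar> \<le> 1" using Cauchy_Schwarz_ineq2[of z1 z2] n1 n2 by (simp add: c_def)
    have "c \<noteq> 1"
    proof
      assume "c = 1"
      then have "(norm (z1 - z2))^2 = 0" using sphere_dist[OF n1 n2] by (simp add: c_def)
      then show False using ne by simp
    qed
    moreover have "c \<noteq> -1"
    proof
      assume "c = -1"
      then have "(norm (z1 + z2))^2 = 0"
        by (simp add: power2_norm_eq_inner inner_add_left inner_add_right ii1 ii2
            inner_commute[of z2 z1] c_def)
      then have "z1 + z2 = 0" by simp
      then have "z2 = - z1" by (simp add: add_eq_0_iff)
      then show False using c1 c2 m_pos by simp
    qed
    ultimately have cm: "-1 < c" "c < 1" using cabs by auto
    define s where "s = sqrt (1 - c^2)"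
    have s_pos: "s > 0" using cm unfolding s_def by (simp add: abs_square_less_1)
    define w where "w = z2 - c *\<^sub>R z1"
    have ww: "w \<bullet> w = s^2" using s_pos cm unfolding w_def s_def
      by (simp add: inner_diff_left inner_diff_right ii1 ii2 inner_commute[of z2 z1] c_def[symmetric]
          power2_eq_square abs_square_less_1 algebra_simps)
    define b where "b = (1/s) *\<^sub>R w"
    have bb: "b \<bullet> b = 1" using ww s_pos by (simp add: b_def power2_eq_square)
    have ab: "z1 \<bullet> b = 0" using s_pos
      by (simp add: b_def w_def inner_diff_right ii1 c_def)
    have bz0: "b \<bullet> z0 = (z2 \<bullet> z0 - c * (z1 \<bullet> z0)) / s"
      by (simp add: b_def w_def inner_diff_left)
    define \<theta> where "\<theta> = arccos c"
    have th: "0 < \<theta>" "\<theta> < pi" using arccos_lt_bounded[OF cm] by (auto simp: \<theta>_def)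
    have cth: "cos \<theta> = c" using cm by (simp add: \<theta>_def cos_arccos)
    have sth: "sin \<theta> = s" using cm by (simp add: \<theta>_def sin_arccos s_def)
    define \<gamma> where "\<gamma> = cs z1 b"
    have g0: "\<gamma> 0 = z1" by (simp add: \<gamma>_def cs_def)
    have gth: "\<gamma> \<theta> = z2" using s_pos
      by (simp add: \<gamma>_def cs_def cth sth b_def w_def)
    have orth: "cs z1 b t \<bullet> cs z1 b t = 1" "cs b (-z1) t \<bullet> cs b (-z1) t = 1"
       "cs b (-z1) t \<bullet> cs z1 b t = 0" for t
      using cs_orth[OF ii1 bb ab] by auto
    have inR: "\<gamma> t \<in> region z0 \<nu>" if "0 \<le> t" "t \<le> \<theta>" for t
    proof -
      have sa: "sin (\<theta> - t) \<ge> 0" "sin t \<ge> 0" using that th by (auto intro!: sin_ge_zero)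
      have e1: "s * (\<gamma> t \<bullet> z0) = sin (\<theta> - t) * (z1 \<bullet> z0) + sin t * (z2 \<bullet> z0)"
        using s_pos by (simp add: \<gamma>_def cs_def inner_add_left bz0 sin_diff cth sth algebra_simps diff_divide_distrib)
      have "s = sin ((\<theta> - t) + t)" using sth by simp
      also have "\<dots> = sin (\<theta> - t) * cos t + cos (\<theta> - t) * sin t" by (rule sin_add)
      also have "\<dots> \<le> sin (\<theta> - t) + sin t"
      proof -
        have "sin (\<theta> - t) * cos t \<le> sin (\<theta> - t)" using sa by (simp add: mult_left_le)
        moreover have "cos (\<theta> - t) * sin t \<le> sin t" using sa
          by (metis mult.commute mult_left_le cos_le_one)
        ultimately show ?thesis by simp
      qed
      finally have sle: "s \<le> sin (\<theta> - t) + sin t" .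
      have "m * s \<le> m * (sin (\<theta> - t) + sin t)" using sle m_pos by simp
      also have "\<dots> \<le> sin (\<theta> - t) * (z1 \<bullet> z0) + sin t * (z2 \<bullet> z0)"
        using mult_right_mono[OF c1 sa(1)] mult_left_mono[OF c2 sa(2)]
        by (simp add: distrib_left mult.commute)
      finally have "m * s \<le> s * (\<gamma> t \<bullet> z0)" using e1 by simp
      then have "m \<le> \<gamma> t \<bullet> z0" using s_pos by (simp add: mult.commute)
      moreover have "norm (\<gamma> t) = 1" using orth by (simp add: \<gamma>_def norm_eq_1)
      ultimately show ?thesis using R by simp
    qed
    define G where "G t = obj A \<beta> (\<gamma> t)" for t
    define G1 where "G1 t = 1/2 * (cs b (-z1) t \<bullet> (A *v cs z1 b t) + cs z1 b t \<bullet> (A *v cs b (-z1) t))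
       + \<beta>/2 * (4 * (\<Sum>k\<in>UNIV. (cs z1 b t $ k)^3 * cs b (-z1) t $ k))" for t
    define G2 where "G2 t = 1/2 * ((cs (-z1) (-b) t \<bullet> (A *v cs z1 b t) + cs b (-z1) t \<bullet> (A *v cs b (-z1) t))
        + (cs b (-z1) t \<bullet> (A *v cs b (-z1) t) + cs z1 b t \<bullet> (A *v cs (-z1) (-b) t)))
       + \<beta>/2 * (4 * (\<Sum>k\<in>UNIV. 3 * (cs z1 b t $ k)^2 * (cs b (-z1) t $ k) * cs b (-z1) t $ k
        + (cs z1 b t $ k)^3 * cs (-z1) (-b) t $ k))" for t
    have dG: "DERIV G t :> G1 t" for t
    proof -
      have "DERIV G t :> 1/2 * (cs b (-z1) t \<bullet> (A *v cs z1 b t) + cs z1 b t \<bullet> (A *v cs b (-z1) t))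
        + \<beta>/2 * (\<Sum>k\<in>UNIV. 4 * (cs z1 b t $ k)^3 * (cs b (-z1) t $ k))"
        unfolding G_def obj_def \<gamma>_def
        by (intro DERIV_add DERIV_cmult bil_deriv quart_deriv)
      moreover have "(\<Sum>k\<in>UNIV. 4 * (cs z1 b t $ k)^3 * (cs b (-z1) t $ k))
          = 4 * (\<Sum>k\<in>UNIV. (cs z1 b t $ k)^3 * cs b (-z1) t $ k)"
        by (simp add: sum_distrib_left mult_ac)
      ultimately show ?thesis by (simp add: G1_def)
    qed
    have dG1: "DERIV G1 t :> G2 t" for t
      unfolding G1_def G2_def
      by (intro DERIV_add DERIV_cmult bil_deriv mixed_deriv)
    have G2pos: "G2 t > 0" if "0 \<le> t" "t \<le> \<theta>" for t
    proof -
      have "G2 t = hess_form A \<beta> (\<gamma> t) (cs b (-z1) t)"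
        unfolding G2_def \<gamma>_def cs_neg by (rule G2_hess[OF orth(2)])
      moreover have "cs b (-z1) t \<in> tangent_space (\<gamma> t) - {0}"
        using orth(2,3)[of t] by (auto simp: tangent_space_def \<gamma>_def)
      ultimately show ?thesis using hess_pos inR[OF that] by auto
    qed
    have contg: "continuous (at t) \<gamma>" for t
      unfolding \<gamma>_def cs_def by (intro continuous_intros)
    have G10: "G1 0 \<ge> 0"
    proof (rule ccontr)
      assume "\<not> G1 0 \<ge> 0"
      then have "G1 0 < 0" by simp
      from DERIV_neg_dec_right[OF dG this]
      obtain d where d: "d > 0" "\<forall>h>0. h < d \<longrightarrow> G 0 > G (0 + h)" by blast
      obtain \<epsilon> where e: "\<epsilon> > 0" "\<forall>w\<in>region z0 \<nu>. norm (w - z1) < \<epsilon> \<longrightarrow> obj A \<beta> z1 \<le> obj A \<beta> w"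
        using lm1 by (auto simp: local_minimizer_on_def)
      obtain \<delta> where dl: "\<delta> > 0" "\<forall>x'. dist x' 0 < \<delta> \<longrightarrow> dist (\<gamma> x') (\<gamma> 0) < \<epsilon>"
        using contg[of 0] e(1) unfolding continuous_at_eps_delta by blast
      define h where "h = min d (min \<delta> \<theta>) / 2"
      have h: "h > 0" "h < d" "h < \<delta>" "h \<le> \<theta>" using d dl th by (auto simp: h_def)
      have "norm (\<gamma> h - z1) < \<epsilon>" using dl(2)[rule_format, of h] h g0 by (simp add: dist_norm)
      moreover have "\<gamma> h \<in> region z0 \<nu>" using inR[of h] h by simp
      ultimately have "obj A \<beta> z1 \<le> obj A \<beta> (\<gamma> h)" using e(2) by blast
      then have "G 0 \<le> G h" by (simp add: G_def g0)
      moreover have "G 0 > G h" using d(2) h by auto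
      ultimately show False by simp
    qed
    have G1th: "G1 \<theta> \<le> 0"
    proof (rule ccontr)
      assume "\<not> G1 \<theta> \<le> 0"
      then have "G1 \<theta> > 0" by simp
      from DERIV_pos_inc_left[OF dG this]
      obtain d where d: "d > 0" "\<forall>h>0. h < d \<longrightarrow> G (\<theta> - h) < G \<theta>" by blast
      obtain \<epsilon> where e: "\<epsilon> > 0" "\<forall>w\<in>region z0 \<nu>. norm (w - z2) < \<epsilon> \<longrightarrow> obj A \<beta> z2 \<le> obj A \<beta> w"
        using lm2 by (auto simp: local_minimizer_on_def)
      obtain \<delta> where dl: "\<delta> > 0" "\<forall>x'. dist x' \<theta> < \<delta> \<longrightarrow> dist (\<gamma> x') (\<gamma> \<theta>) < \<epsilon>"
        using contg[of \<theta>] e(1) unfolding continuous_at_eps_delta by blast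
      define h where "h = min d (min \<delta> \<theta>) / 2"
      have h: "h > 0" "h < d" "h < \<delta>" "h \<le> \<theta>" using d dl th by (auto simp: h_def)
      have "norm (\<gamma> (\<theta> - h) - z2) < \<epsilon>" using dl(2)[rule_format, of "\<theta> - h"] h gth
        by (simp add: dist_norm)
      moreover have "\<gamma> (\<theta> - h) \<in> region z0 \<nu>" using inR[of "\<theta> - h"] h by simp
      ultimately have "obj A \<beta> z2 \<le> obj A \<beta> (\<gamma> (\<theta> - h))" using e(2) by blast
      then have "G \<theta> \<le> G (\<theta> - h)" by (simp add: G_def gth)
      moreover have "G (\<theta> - h) < G \<theta>" using d(2) h by auto
      ultimately show False by simp
    qed
    have "\<exists>\<xi>. 0 < \<xi> \<and> \<xi> < \<theta> \<and> G1 \<theta> - G1 0 = (\<theta> - 0) * G2 \<xi>"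
      by (rule MVT2[OF th(1)], rule dG1)
    then obtain \<xi> where xi: "0 < \<xi>" "\<xi> < \<theta>" "G1 \<theta> - G1 0 = (\<theta> - 0) * G2 \<xi>" by blast
    have "G2 \<xi> > 0" using G2pos xi by simp
    then have "G1 \<theta> - G1 0 > 0" using xi th by simp
    then show False using G10 G1th by simp
  qed
qed
end
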